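(* Let $n\ge1$ be a natural number, let $a,b,\alpha,\beta,\theta$ be variables (with $\beta a-\alpha b\neq0$), and define \[ \Psi_r(n)=\Psi\left(\begin{array}{cc|c} a-\alpha\theta & b-\beta\theta & n \\ \alpha & \beta & r \end{array}\right),\qquad \Phi_r(n)=\Phi\left(\begin{array}{cc|c} a-\alpha\theta & b-\beta\theta & n \\ \alpha & \beta & r \end{array}\right), \] viewed as polynomials in $a,b,\alpha,\beta,\theta$. Then \[ \Psi_r(n)=-\frac{1}{r}\Big(-\frac{\partial}{\partial\theta}\Big)\Psi_{r-1}(n)\ \ (1\le r\le\lfloor n/2\rfloor),\qquad \Phi_r(n)=-\frac{1}{r}\Big(-\frac{\partial}{\partial\theta}\Big)\Phi_{r-1}(n)\ \ (1\le r\le\lfloor (n-1)/2\rfloor). \]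
   Context: $\delta(m)=1$ for $m$ odd, $0$ for $m$ even; $\lfloor\cdot\rfloor$ is the floor. For indeterminates $a,b,\alpha,\beta$ and $n\ge1$, $\Psi\left(\begin{array}{cc|c} a & b & n \\ \alpha & \beta & r \end{array}\right)$ ($0\le r\le\lfloor n/2\rfloor$) and $\Phi\left(\begin{array}{cc|c} a & b & n \\ \alpha & \beta & r \end{array}\right)$ ($0\le r\le\lfloor (n-1)/2\rfloor$) are the unique polynomials in $\mathbb{Z}[a,b,\alpha,\beta]$ such that, identically in $x,y$, $(\beta a-\alpha b)^{\lfloor n/2\rfloor}\frac{x^n+y^n}{(x+y)^{\delta(n)}}=\sum_{r}\Psi\left(\begin{array}{cc|c} a & b & n \\ \alpha & \beta & r \end{array}\right)(\alpha x^2+\beta xy+\alpha y^2)^{\lfloor n/2\rfloor-r}(ax^2+bxy+ay^2)^r$ and $(\beta a-\alpha b)^{\lfloor (n-1)/2\rfloor}\frac{x^n-y^n}{(x-y)(x+y)^{\delta(n-1)}}=\sum_{r}\Phi\left(\begin{array}{cc|c} a & b & n \\ \alpha & \beta & r \end{array}\right)(\alpha x^2+\beta xy+\alpha y^2)^{\lfloor (n-1)/2\rfloor-r}(ax^2+bxy+ay^2)^r$. Substituting $a-\alpha\theta$, $b-\beta\theta$ for $a$, $b$ gives polynomials in $a,b,\alpha,\beta,\theta$. *)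

theory Defs
  imports Complex_Main
begin

definition delta :: "nat \<Rightarrow> nat" where
  "delta m = (if odd m then 1 else 0)"

text \<open>Values of the polynomials Psi and Phi at real arguments a, b, al, be
  (with be*a - al*b nonzero, where the coefficient family is unique).
  The division by (x+y)^delta resp. (x-y)(x+y)^delta is written multiplied out.\<close>

definition Psi :: "nat \<Rightarrow> nat \<Rightarrow> real \<Rightarrow> real \<Rightarrow> real \<Rightarrow> real \<Rightarrow> real" where
  "Psi n r a b al be =
    (THE c :: nat \<Rightarrow> real. (\<forall>k. n div 2 < k \<longrightarrow> c k = 0) \<and>
      (\<forall>x y :: real. (be * a - al * b) ^ (n div 2) * (x ^ n + y ^ n) =
         (x + y) ^ delta n *
         (\<Sum>k\<le>n div 2. c k * (al * x^2 + be * x * y + al * y^2) ^ (n div 2 - k)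
                              * (a * x^2 + b * x * y + a * y^2) ^ k))) r"

definition Phi :: "nat \<Rightarrow> nat \<Rightarrow> real \<Rightarrow> real \<Rightarrow> real \<Rightarrow> real \<Rightarrow> real" where
  "Phi n r a b al be =
    (THE c :: nat \<Rightarrow> real. (\<forall>k. (n - 1) div 2 < k \<longrightarrow> c k = 0) \<and>
      (\<forall>x y :: real. (be * a - al * b) ^ ((n - 1) div 2) * (x ^ n - y ^ n) =
         (x - y) * (x + y) ^ delta (n - 1) *
         (\<Sum>k\<le>(n - 1) div 2. c k * (al * x^2 + be * x * y + al * y^2) ^ ((n - 1) div 2 - k)
                              * (a * x^2 + b * x * y + a * y^2) ^ k))) r"

end

theory Submission
  imports Defs "HOL-Computational_Algebra.Polynomial"
begin

inductive homg :: "(real\<Rightarrow>real\<Rightarrow>real) \<Rightarrow> (real\<Rightarrow>real\<Rightarrow>real) \<Rightarrow> nat \<Rightarrow> (real\<Rightarrow>real\<Rightarrow>real) \<Rightarrow> bool"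
  for A B where
  hc: "homg A B 0 (\<lambda>x y. r)"
| hs: "homg A B m f \<Longrightarrow> homg A B m g \<Longrightarrow> homg A B (Suc m) (\<lambda>x y. A x y * f x y + B x y * g x y)"

lemma homg_cong: "homg A B m f \<Longrightarrow> (\<And>x y. g x y = f x y) \<Longrightarrow> homg A B m g"
proof -
  assume "homg A B m f" "\<And>x y. g x y = f x y"
  moreover have "g = f" using \<open>\<And>x y. g x y = f x y\<close> by (intro ext) auto
  ultimately show ?thesis by simp
qed

lemma hs': "homg A B m f \<Longrightarrow> homg A B m g \<Longrightarrow> (\<And>x y. h x y = A x y * f x y + B x y * g x y)
  \<Longrightarrow> homg A B (Suc m) h"
  by (rule homg_cong[OF hs]) auto

lemma hc': "(\<And>x y. h x y = r) \<Longrightarrow> homg A B 0 h"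
  by (rule homg_cong[OF hc]) auto

lemma homg_zero: "homg A B m (\<lambda>x y. 0)"
  by (induction m) (auto intro: hc' hs')

lemma homg_add: "homg A B m f \<Longrightarrow> homg A B m g \<Longrightarrow> homg A B m (\<lambda>x y. f x y + g x y)"
proof (induction arbitrary: g rule: homg.induct)
  case (hc r)
  from hc.prems show ?case by cases (auto intro: hc')
next
  case (hs m f1 g1)
  note IH = hs.IH
  from hs.prems obtain f2 g2 where g: "g = (\<lambda>x y. A x y * f2 x y + B x y * g2 x y)"
    and f2: "homg A B m f2" and g2: "homg A B m g2"
    by (cases rule: homg.cases) auto
  show ?case
    by (rule hs'[OF IH(1)[OF f2] IH(2)[OF g2]]) (simp add: g algebra_simps)
qed

lemma homg_scale: "homg A B m f \<Longrightarrow> homg A B m (\<lambda>x y. r * f x y)"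
proof (induction rule: homg.induct)
  case (hc s) show ?case by (rule hc')  simp
next
  case (hs m f g)
  show ?case by (rule hs'[OF hs.IH]) (simp add: algebra_simps)
qed

lemma homg_mulA: "homg A B m f \<Longrightarrow> homg A B (Suc m) (\<lambda>x y. A x y * f x y)"
  by (rule hs'[OF _ homg_zero]) auto

lemma homg_mulB: "homg A B m f \<Longrightarrow> homg A B (Suc m) (\<lambda>x y. B x y * f x y)"
  by (rule hs'[OF homg_zero]) auto

lemma homg0: "homg A B 0 h \<Longrightarrow> \<exists>r. \<forall>x y. h x y = r"
  by (cases rule: homg.cases) auto

lemma homg1: assumes "homg A B (Suc 0) h" shows "\<exists>r1 r2. \<forall>x y. h x y = A x y * r1 + B x y * r2"
  using assms
proof (cases rule: homg.cases)
  case (hs f g)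
  obtain r1 where "\<forall>x y. f x y = r1" using homg0 hs by blast
  moreover obtain r2 where "\<forall>x y. g x y = r2" using homg0 hs by blast
  ultimately show ?thesis using hs by auto
qed

lemma homg_scaleAB: "homg A B m f \<Longrightarrow>
   homg (\<lambda>x y. r * A x y) (\<lambda>x y. r * B x y) m (\<lambda>x y. r ^ m * f x y)"
proof (induction rule: homg.induct)
  case (hc s) show ?case by (rule hc') simp
next
  case (hs m f g)
  show ?case by (rule hs'[OF hs.IH]) (simp add: algebra_simps)
qed

lemma homg_change: "homg A' B' m f \<Longrightarrow> homg A B 1 A' \<Longrightarrow> homg A B 1 B' \<Longrightarrow> homg A B m f"
proof (induction rule: homg.induct)
  case (hc r) show ?case by (rule homg.hc)
next
  case (hs m f g)
  have f: "homg A B m f" and g: "homg A B m g" using hs by auto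
  obtain p1 p2 where p: "\<forall>x y. A' x y = A x y * p1 + B x y * p2" using homg1 hs.prems(1) by fastforce
  obtain q1 q2 where q: "\<forall>x y. B' x y = A x y * q1 + B x y * q2" using homg1 hs.prems(2) by fastforce
  have 1: "homg A B (Suc m) (\<lambda>x y. A' x y * f x y)"
    by (rule hs'[OF homg_scale[OF f, of p1] homg_scale[OF f, of p2]]) (simp add: p algebra_simps)
  have 2: "homg A B (Suc m) (\<lambda>x y. B' x y * g x y)"
    by (rule hs'[OF homg_scale[OF g, of q1] homg_scale[OF g, of q2]]) (simp add: q algebra_simps)
  show ?case by (rule homg_add[OF 1 2])
qed

lemma homg_sum: "homg A B m f \<Longrightarrow> \<exists>c. \<forall>x y. f x y = (\<Sum>k\<le>m. c k * A x y ^ (m - k) * B x y ^ k)"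
proof (induction rule: homg.induct)
  case (hc r)
  show ?case by (rule exI[of _ "\<lambda>_. r"]) simp
next
  case (hs m f g)
  obtain c where c: "\<forall>x y. f x y = (\<Sum>k\<le>m. c k * A x y ^ (m - k) * B x y ^ k)" using hs by blast
  obtain d where d: "\<forall>x y. g x y = (\<Sum>k\<le>m. d k * A x y ^ (m - k) * B x y ^ k)" using hs by blast
  define e where "e k = (if k \<le> m then c k else 0) + (if k = 0 then 0 else d (k - 1))" for k
  show ?case
  proof (rule exI[of _ e], intro allI)
    fix x y
    let ?A = "A x y" and ?B = "B x y"
    have "(\<Sum>k\<le>Suc m. e k * ?A ^ (Suc m - k) * ?B ^ k)
       = (\<Sum>k\<le>Suc m. (if k \<le> m then c k else 0) * ?A ^ (Suc m - k) * ?B ^ k)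
       + (\<Sum>k\<le>Suc m. (if k = 0 then 0 else d (k - 1)) * ?A ^ (Suc m - k) * ?B ^ k)"
      by (simp add: e_def distrib_right sum.distrib)
    also have "(\<Sum>k\<le>Suc m. (if k \<le> m then c k else 0) * ?A ^ (Suc m - k) * ?B ^ k)
        = (\<Sum>k\<le>m. c k * ?A ^ (Suc m - k) * ?B ^ k)"
      by (simp add: sum.atMost_Suc)
    also have "\<dots> = ?A * (\<Sum>k\<le>m. c k * ?A ^ (m - k) * ?B ^ k)"
      by (simp add: sum_distrib_left Suc_diff_le algebra_simps)
    also have "(\<Sum>k\<le>Suc m. (if k = 0 then 0 else d (k - 1)) * ?A ^ (Suc m - k) * ?B ^ k)
        = (\<Sum>k\<le>m. d k * ?A ^ (m - k) * ?B ^ Suc k)"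
      by (subst sum.atMost_Suc_shift) simp
    also have "\<dots> = ?B * (\<Sum>k\<le>m. d k * ?A ^ (m - k) * ?B ^ k)"
      by (simp add: sum_distrib_left algebra_simps)
    finally show "?A * f x y + ?B * g x y = (\<Sum>k\<le>Suc m. e k * ?A ^ (Suc m - k) * ?B ^ k)"
      using c d by simp
  qed
qed


fun Sq :: "(real\<Rightarrow>real\<Rightarrow>real) \<Rightarrow> (real\<Rightarrow>real\<Rightarrow>real) \<Rightarrow> nat \<Rightarrow> real \<Rightarrow> real \<Rightarrow> real" where
  "Sq f0 f1 0 = f0"
| "Sq f0 f1 (Suc 0) = f1"
| "Sq f0 f1 (Suc (Suc k)) = (\<lambda>x y. (x^2 + y^2) * Sq f0 f1 (Suc k) x y - (x*y)^2 * Sq f0 f1 k x y)"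

lemma Sq_homg:
  assumes "homg (\<lambda>x y. x^2+y^2) (\<lambda>x y. x*y) 0 f0" "homg (\<lambda>x y. x^2+y^2) (\<lambda>x y. x*y) 1 f1"
  shows "homg (\<lambda>x y. x^2+y^2) (\<lambda>x y. x*y) k (Sq f0 f1 k)"
proof -
  have "homg (\<lambda>x y. x^2+y^2) (\<lambda>x y. x*y) k (Sq f0 f1 k) \<and>
        homg (\<lambda>x y. x^2+y^2) (\<lambda>x y. x*y) (Suc k) (Sq f0 f1 (Suc k))"
  proof (induction k)
    case 0 then show ?case using assms by simp
  next
    case (Suc k)
    have a: "homg (\<lambda>x y. x^2+y^2) (\<lambda>x y. x*y) (Suc (Suc k)) (\<lambda>x y. (x^2+y^2) * Sq f0 f1 (Suc k) x y)"
      using homg_mulA Suc by blast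
    have b: "homg (\<lambda>x y. x^2+y^2) (\<lambda>x y. x*y) (Suc (Suc k)) (\<lambda>x y. (-1) * ((x*y) * ((x*y) * Sq f0 f1 k x y)))"
      by (rule homg_scale[OF homg_mulB[OF homg_mulB]]) (use Suc in blast)
    have "homg (\<lambda>x y. x^2+y^2) (\<lambda>x y. x*y) (Suc (Suc k)) (Sq f0 f1 (Suc (Suc k)))"
      by (rule homg_cong[OF homg_add[OF a b]]) (simp add: power2_eq_square algebra_simps)
    then show ?case using Suc by simp
  qed
  then show ?thesis by simp
qed

lemma Sq_id:
  assumes "h * f0 x y = p + q" "h * f1 x y = p * x^2 + q * y^2"
  shows "h * Sq f0 f1 k x y = p * (x^2)^k + q * (y^2)^k"
proof -
  have "h * Sq f0 f1 k x y = p * (x^2)^k + q * (y^2)^k \<and>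
        h * Sq f0 f1 (Suc k) x y = p * (x^2)^(Suc k) + q * (y^2)^(Suc k)"
  proof (induction k)
    case 0 then show ?case using assms by simp
  next
    case (Suc k)
    have "h * Sq f0 f1 (Suc (Suc k)) x y = (x^2+y^2) * (h * Sq f0 f1 (Suc k) x y) - (x*y)^2 * (h * Sq f0 f1 k x y)"
      by (simp add: algebra_simps)
    also have "\<dots> = p * (x^2)^(Suc (Suc k)) + q * (y^2)^(Suc (Suc k))"
      using Suc by (simp add: power_mult_distrib algebra_simps)
    finally show ?case using Suc by simp
  qed
  then show ?thesis by simp
qed


definition Rep :: "nat \<Rightarrow> (real\<Rightarrow>real\<Rightarrow>real) \<Rightarrow> (real\<Rightarrow>real\<Rightarrow>real) \<Rightarrow> real \<Rightarrow> real \<Rightarrow> real \<Rightarrow> real \<Rightarrow> (nat \<Rightarrow> real) \<Rightarrow> bool" where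
  "Rep m e F a b al be c \<longleftrightarrow> (\<forall>k. m < k \<longrightarrow> c k = 0) \<and>
     (\<forall>x y :: real. (be * a - al * b) ^ m * F x y =
        e x y * (\<Sum>k\<le>m. c k * (al * x^2 + be * x * y + al * y^2) ^ (m - k)
                              * (a * x^2 + b * x * y + a * y^2) ^ k))"

lemma Psi_Rep: "Psi n r a b al be = (THE c. Rep (n div 2) (\<lambda>x y. (x+y)^delta n) (\<lambda>x y. x^n + y^n) a b al be c) r"
  by (simp add: Psi_def Rep_def)

lemma Phi_Rep: "Phi n r a b al be = (THE c. Rep ((n - 1) div 2) (\<lambda>x y. (x - y) * (x+y)^delta (n - 1)) (\<lambda>x y. x^n - y^n) a b al be c) r"
  by (simp add: Phi_def Rep_def)

lemma homg1I:
  fixes s t :: real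
  assumes "\<And>x y. h x y = A x y * s + B x y * t"
  shows "homg A B 1 h"
proof -
  have "homg A B (Suc 0) h" by (rule hs'[OF hc[of A B s] hc[of A B t]]) (simp add: assms)
  then show ?thesis by simp
qed

lemma Rep_exists:
  assumes D: "be * a - al * b \<noteq> 0"
    and G: "homg (\<lambda>x y. x^2+y^2) (\<lambda>x y. x*y) m G"
    and F: "\<And>x y. F x y = e x y * G x y"
  shows "\<exists>c. Rep m e F a b al be c"
proof -
  define d where "d = be * a - al * b"
  let ?P = "\<lambda>x y::real. al * x^2 + be * x * y + al * y^2"
  let ?Q = "\<lambda>x y::real. a * x^2 + b * x * y + a * y^2"
  have 1: "homg (\<lambda>x y. d * (x^2+y^2)) (\<lambda>x y. d * (x*y)) m (\<lambda>x y. d ^ m * G x y)"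
    by (rule homg_scaleAB[OF G])
  have u: "homg ?P ?Q 1 (\<lambda>x y. d * (x^2+y^2))"
    by (rule homg1I[where s="-b" and t=be]) (simp add: d_def algebra_simps power2_eq_square)
  have v: "homg ?P ?Q 1 (\<lambda>x y. d * (x*y))"
    by (rule homg1I[where s=a and t="-al"]) (simp add: d_def algebra_simps power2_eq_square)
  have 2: "homg ?P ?Q m (\<lambda>x y. d ^ m * G x y)"
    by (rule homg_change[OF 1 u v])
  obtain c where c: "\<forall>x y. d ^ m * G x y = (\<Sum>k\<le>m. c k * ?P x y ^ (m - k) * ?Q x y ^ k)"
    using homg_sum[OF 2] by blast
  define c' where "c' k = (if k \<le> m then c k else 0)" for k
  have "Rep m e F a b al be c'"
    unfolding Rep_def
  proof (intro conjI allI impI)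
    fix k assume "m < k" then show "c' k = 0" by (simp add: c'_def)
  next
    fix x y :: real
    have "d ^ m * F x y = e x y * (d ^ m * G x y)" by (simp add: F algebra_simps)
    also have "\<dots> = e x y * (\<Sum>k\<le>m. c' k * ?P x y ^ (m - k) * ?Q x y ^ k)"
      using c by (simp add: c'_def)
    finally show "(be * a - al * b) ^ m * F x y = e x y * (\<Sum>k\<le>m. c' k * ?P x y ^ (m - k) * ?Q x y ^ k)"
      by (simp add: d_def)
  qed
  then show ?thesis by blast
qed

lemma homg_u: "homg (\<lambda>x y. x^2+y^2) (\<lambda>x y. x*y) 1 (\<lambda>x y. x^2+y^2)"
  by (rule homg1I[where s=1 and t=0]) simp

lemma Psi_exists:
  assumes D: "be * a - al * b \<noteq> 0"
  shows "\<exists>c. Rep (n div 2) (\<lambda>x y. (x+y)^delta n) (\<lambda>x y. x^n + y^n) a b al be c"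
proof (cases "even n")
  case True
  then obtain m where n: "n = 2 * m" by blast
  let ?G = "Sq (\<lambda>x y. 2) (\<lambda>x y. x^2+y^2) m"
  show ?thesis
  proof (rule Rep_exists[OF D, where G = ?G])
    show "homg (\<lambda>x y. x^2+y^2) (\<lambda>x y. x*y) (n div 2) ?G"
      using n by (simp, intro Sq_homg hc homg_u)
    fix x y :: real
    have "1 * ?G x y = 1 * (x^2)^m + 1 * (y^2)^m"
      by (rule Sq_id) simp_all
    then show "x^n + y^n = (x+y)^delta n * ?G x y"
      using n by (simp add: delta_def power_mult)
  qed
next
  case False
  then obtain m where n: "n = 2 * m + 1" using oddE by blast
  let ?G = "Sq (\<lambda>x y. 1) (\<lambda>x y. x^2+y^2 - x*y) m"
  show ?thesis
  proof (rule Rep_exists[OF D, where G = ?G])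
    show "homg (\<lambda>x y. x^2+y^2) (\<lambda>x y. x*y) (n div 2) ?G"
      using n by (simp, intro Sq_homg hc homg1I[where s=1 and t="-1"]) simp
    fix x y :: real
    have "(x+y) * ?G x y = x * (x^2)^m + y * (y^2)^m"
      by (rule Sq_id) (simp_all add: algebra_simps power2_eq_square)
    then show "x^n + y^n = (x+y)^delta n * ?G x y"
      using n by (simp add: delta_def power_mult)
  qed
qed

lemma Phi_exists:
  assumes D: "be * a - al * b \<noteq> 0" and n1: "n \<ge> 1"
  shows "\<exists>c. Rep ((n - 1) div 2) (\<lambda>x y. (x - y) * (x+y)^delta (n - 1)) (\<lambda>x y. x^n - y^n) a b al be c"
proof (cases "odd n")
  case True
  then obtain m where n: "n = 2 * m + 1" using oddE by blast
  let ?G = "Sq (\<lambda>x y. 1) (\<lambda>x y. x^2+y^2 + x*y) m"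
  show ?thesis
  proof (rule Rep_exists[OF D, where G = ?G])
    show "homg (\<lambda>x y. x^2+y^2) (\<lambda>x y. x*y) ((n - 1) div 2) ?G"
      using n by (simp, intro Sq_homg hc homg1I[where s=1 and t=1]) simp
    fix x y :: real
    have "(x-y) * ?G x y = x * (x^2)^m + (-y) * (y^2)^m"
      by (rule Sq_id) (simp_all add: algebra_simps power2_eq_square)
    then show "x^n - y^n = ((x - y) * (x+y)^delta (n - 1)) * ?G x y"
      using n by (simp add: delta_def power_mult)
  qed
next
  case False
  then obtain k where k: "n = 2 * k" by auto
  with n1 have "n = 2 * (k - 1) + 2" by simp
  then obtain m where n: "n = 2 * m + 2" by blast
  let ?G = "Sq (\<lambda>x y. 1) (\<lambda>x y. x^2+y^2) m"
  show ?thesis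
  proof (rule Rep_exists[OF D, where G = ?G])
    show "homg (\<lambda>x y. x^2+y^2) (\<lambda>x y. x*y) ((n - 1) div 2) ?G"
      using n by (simp, intro Sq_homg hc homg_u)
    fix x y :: real
    have "((x-y)*(x+y)) * ?G x y = x^2 * (x^2)^m + (- (y^2)) * (y^2)^m"
      by (rule Sq_id) (simp_all add: algebra_simps power2_eq_square)
    then show "x^n - y^n = ((x - y) * (x+y)^delta (n - 1)) * ?G x y"
      using n by (simp add: delta_def power_mult power_add power2_eq_square algebra_simps)
  qed
qed


lemma uniq_poly:
  fixes a b al be :: real and c :: "nat \<Rightarrow> real"
  assumes D: "be * a - al * b \<noteq> 0" and E: "finite E"
    and h: "\<And>s. s \<notin> E \<Longrightarrow> (\<Sum>k\<le>m. c k * (al + be * s + al * s^2) ^ (m - k) * (a + b * s + a * s^2) ^ k) = 0"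
  shows "\<forall>k\<le>m. c k = 0"
proof -
  define Pf where "Pf s = al + be * s + al * s^2" for s
  define Qf where "Qf s = a + b * s + a * s^2" for s
  define p where "p = (\<Sum>k\<le>m. monom (c k) k)"
  have poly_p: "poly p z = (\<Sum>k\<le>m. c k * z^k)" for z
    by (simp add: p_def poly_sum poly_monom)
  have fP: "finite {s. Pf s = 0}"
  proof -
    have ne: "[:al, be, al:] \<noteq> 0" using D by auto
    have "{s. Pf s = 0} = {s. poly [:al, be, al:] s = 0}"
      by (auto simp: Pf_def algebra_simps power2_eq_square)
    then show ?thesis using poly_roots_finite[OF ne] by simp
  qed
  have fib: "finite {s. Qf s - z * Pf s = 0}" for z
  proof -
    have ne: "[:a - z * al, b - z * be, a - z * al:] \<noteq> 0"
    proof
      assume "[:a - z * al, b - z * be, a - z * al:] = 0"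
      then have "a = z * al" "b = z * be" by auto
      then show False using D by (simp add: algebra_simps)
    qed
    have "{s. Qf s - z * Pf s = 0} = {s. poly [:a - z * al, b - z * be, a - z * al:] s = 0}"
      by (auto simp: Pf_def Qf_def algebra_simps power2_eq_square)
    then show ?thesis using poly_roots_finite[OF ne] by simp
  qed
  define S where "S = {s. Pf s \<noteq> 0 \<and> s \<notin> E}"
  define Z where "Z = (\<lambda>s. Qf s / Pf s) ` S"
  have infZ: "infinite Z"
  proof
    assume fZ: "finite Z"
    have "S \<subseteq> (\<Union>z\<in>Z. {s. Qf s - z * Pf s = 0})"
      by (auto simp: S_def Z_def)
    then have "finite S" using fZ fib by (meson finite_UN_I finite_subset)
    moreover have "UNIV = S \<union> {s. Pf s = 0} \<union> E" by (auto simp: S_def)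
    ultimately have "finite (UNIV :: real set)" using fP E by (metis finite_Un)
    then show False using infinite_UNIV_char_0 by blast
  qed
  have rootZ: "poly p z = 0" if "z \<in> Z" for z
  proof -
    obtain s where s: "s \<in> S" "z = Qf s / Pf s" using \<open>z \<in> Z\<close> by (auto simp: Z_def)
    have P0: "Pf s \<noteq> 0" using s by (simp add: S_def)
    have "poly p z = (\<Sum>k\<le>m. c k * Pf s ^ (m - k) * Qf s ^ k) / Pf s ^ m"
      unfolding poly_p sum_divide_distrib
    proof (rule sum.cong[OF refl])
      fix k assume "k \<in> {..m}"
      then have "Pf s ^ m = Pf s ^ (m - k) * Pf s ^ k" by (simp add: power_add[symmetric])
      then show "c k * z ^ k = c k * Pf s ^ (m - k) * Qf s ^ k / Pf s ^ m"
        using P0 by (simp add: s(2) power_divide)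
    qed
    also have "\<dots> = 0" using h[of s] s by (simp add: S_def Pf_def Qf_def)
    finally show ?thesis .
  qed
  have "p = 0"
  proof (rule ccontr)
    assume "p \<noteq> 0"
    then have "finite {z. poly p z = 0}" by (rule poly_roots_finite)
    moreover have "Z \<subseteq> {z. poly p z = 0}" using rootZ by auto
    ultimately show False using infZ finite_subset by blast
  qed
  then have "coeff p k = 0" for k by simp
  moreover have "coeff p k = c k" if "k \<le> m" for k
    using that by (simp add: p_def coeff_sum coeff_monom)
  ultimately show ?thesis by simp
qed

lemma Rep_unique:
  assumes D: "be * a - al * b \<noteq> 0" and E: "finite E" and e: "\<And>s. s \<notin> E \<Longrightarrow> e 1 s \<noteq> 0"
    and c: "Rep m e F a b al be c" and c': "Rep m e F a b al be c'"
  shows "c' = c"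
proof -
  have cc: "\<And>x y. (be*a-al*b)^m * F x y = e x y * (\<Sum>k\<le>m. c k * (al*x^2+be*x*y+al*y^2)^(m-k) * (a*x^2+b*x*y+a*y^2)^k)"
    using c by (simp add: Rep_def)
  have cc': "\<And>x y. (be*a-al*b)^m * F x y = e x y * (\<Sum>k\<le>m. c' k * (al*x^2+be*x*y+al*y^2)^(m-k) * (a*x^2+b*x*y+a*y^2)^k)"
    using c' by (simp add: Rep_def)
  have "\<forall>k\<le>m. c' k - c k = 0"
  proof (rule uniq_poly[OF D E])
    fix s assume "s \<notin> E"
    have "e 1 s * (\<Sum>k\<le>m. c' k * (al + be * s + al * s^2) ^ (m - k) * (a + b * s + a * s^2) ^ k)
        = e 1 s * (\<Sum>k\<le>m. c k * (al + be * s + al * s^2) ^ (m - k) * (a + b * s + a * s^2) ^ k)"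
      using cc[of 1 s] cc'[of 1 s] by simp
    then have "(\<Sum>k\<le>m. c' k * (al + be * s + al * s^2) ^ (m - k) * (a + b * s + a * s^2) ^ k)
        - (\<Sum>k\<le>m. c k * (al + be * s + al * s^2) ^ (m - k) * (a + b * s + a * s^2) ^ k) = 0"
      using e[OF \<open>s \<notin> E\<close>] by simp
    then show "(\<Sum>k\<le>m. (c' k - c k) * (al + be * s + al * s^2) ^ (m - k) * (a + b * s + a * s^2) ^ k) = 0"
      by (simp add: sum_subtractf[symmetric] algebra_simps)
  qed
  moreover have "c' k = 0 \<and> c k = 0" if "m < k" for k using c c' that by (simp add: Rep_def)
  ultimately show ?thesis
    by (intro ext) (metis eq_iff_diff_eq_0 linorder_not_less)
qed


definition cs :: "(nat \<Rightarrow> real) \<Rightarrow> nat \<Rightarrow> real \<Rightarrow> nat \<Rightarrow> real" where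
  "cs c m t j = (\<Sum>k\<le>m. c k * of_nat (k choose j) * t ^ (k - j))"

lemma shift_sum:
  fixes P R t :: real
  shows "(\<Sum>j\<le>m. cs c m t j * P ^ (m - j) * R ^ j) = (\<Sum>k\<le>m. c k * P ^ (m - k) * (R + t * P) ^ k)"
proof -
  have "(\<Sum>j\<le>m. cs c m t j * P ^ (m - j) * R ^ j)
      = (\<Sum>j\<le>m. \<Sum>k\<le>m. c k * (of_nat (k choose j) * t ^ (k - j) * P ^ (m - j) * R ^ j))"
    by (simp add: cs_def sum_distrib_right mult.assoc)
  also have "\<dots> = (\<Sum>k\<le>m. c k * (\<Sum>j\<le>m. of_nat (k choose j) * t ^ (k - j) * P ^ (m - j) * R ^ j))"
    by (subst sum.swap) (simp add: sum_distrib_left)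
  also have "\<dots> = (\<Sum>k\<le>m. c k * P ^ (m - k) * (R + t * P) ^ k)"
  proof (rule sum.cong[OF refl])
    fix k assume k: "k \<in> {..m}"
    have "(\<Sum>j\<le>m. of_nat (k choose j) * t ^ (k - j) * P ^ (m - j) * R ^ j)
        = (\<Sum>j\<le>k. of_nat (k choose j) * t ^ (k - j) * P ^ (m - j) * R ^ j)"
      using k by (intro sum.mono_neutral_right) auto
    also have "\<dots> = (\<Sum>j\<le>k. P ^ (m - k) * (of_nat (k choose j) * R ^ j * (t * P) ^ (k - j)))"
    proof (rule sum.cong[OF refl])
      fix j assume j: "j \<in> {..k}"
      have "P ^ (m - j) = P ^ (m - k) * P ^ (k - j)"
        using j k by (simp add: power_add[symmetric])
      then show "of_nat (k choose j) * t ^ (k - j) * P ^ (m - j) * R ^ j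
          = P ^ (m - k) * (of_nat (k choose j) * R ^ j * (t * P) ^ (k - j))"
        by (simp add: power_mult_distrib algebra_simps)
    qed
    also have "\<dots> = P ^ (m - k) * (R + t * P) ^ k"
      by (simp add: binomial_ring sum_distrib_left)
    finally show "c k * (\<Sum>j\<le>m. of_nat (k choose j) * t ^ (k - j) * P ^ (m - j) * R ^ j)
        = c k * P ^ (m - k) * (R + t * P) ^ k" by simp
  qed
  finally show ?thesis .
qed

lemma Rep_shift:
  assumes "Rep m e F a b al be c"
  shows "Rep m e F (a - al * t) (b - be * t) al be (cs c m t)"
  unfolding Rep_def
proof (intro conjI allI impI)
  fix j assume "m < j"
  then show "cs c m t j = 0" unfolding cs_def by (intro sum.neutral) auto
next
  fix x y :: real
  let ?P = "al * x^2 + be * x * y + al * y^2"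
  let ?R = "(a - al * t) * x^2 + (b - be * t) * x * y + (a - al * t) * y^2"
  have D: "be * (a - al * t) - al * (b - be * t) = be * a - al * b" by (simp add: algebra_simps)
  have Q: "?R + t * ?P = a * x^2 + b * x * y + a * y^2" by (simp add: algebra_simps)
  have "(be * a - al * b) ^ m * F x y = e x y * (\<Sum>k\<le>m. c k * ?P ^ (m - k) * (a * x^2 + b * x * y + a * y^2) ^ k)"
    using assms by (simp add: Rep_def)
  also have "\<dots> = e x y * (\<Sum>j\<le>m. cs c m t j * ?P ^ (m - j) * ?R ^ j)"
    by (simp only: shift_sum Q)
  finally show "(be * (a - al * t) - al * (b - be * t)) ^ m * F x y = e x y * (\<Sum>j\<le>m. cs c m t j * ?P ^ (m - j) * ?R ^ j)"
    by (simp only: D)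
qed

lemma cs_deriv:
  "((\<lambda>t. cs c m t i) has_real_derivative (real (Suc i) * cs c m \<theta> (Suc i))) (at \<theta>)"
proof -
  have "((\<lambda>t. cs c m t i) has_real_derivative
      (\<Sum>k\<le>m. c k * of_nat (k choose i) * (of_nat (k - i) * \<theta> ^ (k - i - 1)))) (at \<theta>)"
    unfolding cs_def by (intro derivative_eq_intros) auto
  moreover have "(\<Sum>k\<le>m. c k * of_nat (k choose i) * (of_nat (k - i) * \<theta> ^ (k - i - 1)))
      = real (Suc i) * cs c m \<theta> (Suc i)"
    unfolding cs_def sum_distrib_left
  proof (rule sum.cong[OF refl])
    fix k
    show "c k * of_nat (k choose i) * (of_nat (k - i) * \<theta> ^ (k - i - 1))
        = real (Suc i) * (c k * of_nat (k choose Suc i) * \<theta> ^ (k - Suc i))"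
    proof (cases "k \<le> i")
      case True
      then show ?thesis by simp
    next
      case False
      have "(k - i) * (k choose i) = Suc i * (k choose Suc i)"
        by (metis binomial_absorb_comp binomial_absorption)
      then have "real (k - i) * real (k choose i) = real (Suc i) * real (k choose Suc i)"
        by (metis of_nat_mult)
      moreover have "k - i - 1 = k - Suc i" by simp
      ultimately have "c k * of_nat (k choose i) * (of_nat (k - i) * \<theta> ^ (k - i - 1))
          = c k * \<theta> ^ (k - Suc i) * (real (Suc i) * real (k choose Suc i))"
        by (metis (no_types, lifting) mult.commute mult.left_commute)
      then show ?thesis by (simp only: mult_ac)
    qed
  qed
  ultimately show ?thesis by simp
qed


lemma THE_Rep:
  assumes "be * a - al * b \<noteq> 0" "finite E" "\<And>s. s \<notin> E \<Longrightarrow> e 1 s \<noteq> 0" "Rep m e F a b al be c"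
  shows "(THE c. Rep m e F a b al be c) = c"
  by (rule the_equality[where P="\<lambda>c. Rep m e F a b al be c", OF assms(4)]) (rule Rep_unique[OF assms(1-4)])

lemma shifted:
  assumes D: "be * a - al * b \<noteq> 0" and E: "finite E" and e: "\<And>s. s \<notin> E \<Longrightarrow> e 1 s \<noteq> 0"
    and c: "Rep m e F a b al be c"
  shows "(THE c. Rep m e F (a - al * t) (b - be * t) al be c) = cs c m t"
proof (rule THE_Rep[OF _ E e Rep_shift[OF c]])
  show "be * (a - al * t) - al * (b - be * t) \<noteq> 0" using D by (simp add: algebra_simps)
qed

lemma final:
  assumes D: "be * a - al * b \<noteq> 0" and E: "finite E" and e: "\<And>s. s \<notin> E \<Longrightarrow> e 1 s \<noteq> 0"
    and c: "Rep m e F a b al be c" and r: "1 \<le> r"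
  shows "\<exists>D. ((\<lambda>t. (THE c. Rep m e F (a - al * t) (b - be * t) al be c) (r - 1)) has_real_derivative D) (at \<theta>)
            \<and> (THE c. Rep m e F (a - al * \<theta>) (b - be * \<theta>) al be c) r = - (1 / real r) * (- D)"
proof -
  have eq: "\<And>t. (THE c. Rep m e F (a - al * t) (b - be * t) al be c) = cs c m t"
    by (rule shifted[OF D E e c])
  have r': "Suc (r - 1) = r" using r by simp
  have "((\<lambda>t. cs c m t (r - 1)) has_real_derivative (real r * cs c m \<theta> r)) (at \<theta>)"
    using cs_deriv[of c m "r - 1" \<theta>] by (simp only: r')
  moreover have "cs c m \<theta> r = - (1 / real r) * (- (real r * cs c m \<theta> r))" using r by simp
  ultimately show ?thesis by (simp only: eq) blast
qed

theorem corollary8p3: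
  fixes n :: nat and a b al be :: real
  assumes "n \<ge> 1" and "be * a - al * b \<noteq> 0"
  shows "(\<forall>\<theta> :: real. \<forall>r :: nat. 1 \<le> r \<and> r \<le> n div 2 \<longrightarrow>
            (\<exists>D. ((\<lambda>t. Psi n (r - 1) (a - al * t) (b - be * t) al be) has_real_derivative D) (at \<theta>)
                 \<and> Psi n r (a - al * \<theta>) (b - be * \<theta>) al be = - (1 / real r) * (- D)))
       \<and> (\<forall>\<theta> :: real. \<forall>r :: nat. 1 \<le> r \<and> r \<le> (n - 1) div 2 \<longrightarrow>
            (\<exists>D. ((\<lambda>t. Phi n (r - 1) (a - al * t) (b - be * t) al be) has_real_derivative D) (at \<theta>)
                 \<and> Phi n r (a - al * \<theta>) (b - be * \<theta>) al be = - (1 / real r) * (- D)))"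
proof (intro conjI allI impI)
  fix \<theta> :: real and r :: nat
  assume r: "1 \<le> r \<and> r \<le> n div 2"
  obtain c where c: "Rep (n div 2) (\<lambda>x y. (x+y)^delta n) (\<lambda>x y. x^n + y^n) a b al be c"
    using Psi_exists[OF assms(2)] by blast
  have fin: "finite {-1::real}" by simp
  have e: "s \<notin> {-1} \<Longrightarrow> (\<lambda>x y. (x+y)^delta n) 1 s \<noteq> 0" for s :: real
    by (auto simp: delta_def add_eq_0_iff)
  show "\<exists>D. ((\<lambda>t. Psi n (r - 1) (a - al * t) (b - be * t) al be) has_real_derivative D) (at \<theta>)
                 \<and> Psi n r (a - al * \<theta>) (b - be * \<theta>) al be = - (1 / real r) * (- D)"
    unfolding Psi_Rep using final[OF assms(2) fin e c, where r=r and \<theta>=\<theta>] r by simp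
next
  fix \<theta> :: real and r :: nat
  assume r: "1 \<le> r \<and> r \<le> (n - 1) div 2"
  obtain c where c: "Rep ((n - 1) div 2) (\<lambda>x y. (x - y) * (x+y)^delta (n - 1)) (\<lambda>x y. x^n - y^n) a b al be c"
    using Phi_exists[OF assms(2) assms(1)] by blast
  have fin: "finite {-1::real, 1}" by simp
  have e: "s \<notin> {-1, 1} \<Longrightarrow> (\<lambda>x y. (x - y) * (x+y)^delta (n - 1)) 1 s \<noteq> 0" for s :: real
    by (auto simp: delta_def add_eq_0_iff)
  show "\<exists>D. ((\<lambda>t. Phi n (r - 1) (a - al * t) (b - be * t) al be) has_real_derivative D) (at \<theta>)
                 \<and> Phi n r (a - al * \<theta>) (b - be * \<theta>) al be = - (1 / real r) * (- D)"
    unfolding Phi_Rep using final[OF assms(2) fin e c, where r=r and \<theta>=\<theta>] r by simp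
qed

end
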